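(* The set $\{[A]\in\mathrm{MALG}: \Phi(A) \text{ is a complete } \boldsymbol{\Pi}^0_3 \text{ set}\}$ is comeager in $\mathrm{MALG}$.
   Context: $2^\omega$ is the Cantor space; $N_s=\{x: s\subset x\}$; $\mu$ the coin-tossing measure with $\mu(N_s)=2^{-\mathrm{lh}(s)}$. For measurable $A$, $\Phi(A)=\{x: \lim_n\mu(A\cap N_{x\restriction n})/\mu(N_{x\restriction n})=1\}$; $\Phi(A)$ depends only on the class $[A]$. $\mathrm{MALG}$ is the set of classes $[A]$ of measurable sets modulo null sets, with the Polish metric $\delta([A],[B])=\mu(A\triangle B)$. A set is complete $\boldsymbol{\Pi}^0_3$ if it is $F_{\sigma\delta}$ and every $F_{\sigma\delta}$ subset of $2^\omega$ is a continuous preimage of it (equivalently it is $F_{\sigma\delta}$ but not $G_{\delta\sigma}$). *)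

theory Defs
  imports "HOL-Probability.Probability"
begin

text \<open>Cantor space 2^omega is the type nat => bool with the product topology
  (bool carries the discrete topology). The coin-tossing measure is the infinite
  product of fair Bernoulli measures.\<close>

type_synonym cantor = "nat \<Rightarrow> bool"

definition coin :: "cantor measure" where
  "coin = PiM UNIV (\<lambda>_::nat. measure_pmf (pmf_of_set (UNIV :: bool set)))"

definition nbhd :: "cantor \<Rightarrow> nat \<Rightarrow> cantor set" where
  "nbhd x n = {y. \<forall>i<n. y i = x i}"

definition Phi :: "cantor set \<Rightarrow> cantor set" where
  "Phi A = {x. (\<lambda>n. measure coin (A \<inter> nbhd x n) / measure coin (nbhd x n)) \<longlonglongrightarrow> 1}"

definition null_eq :: "cantor set \<Rightarrow> cantor set \<Rightarrow> bool" where
  "null_eq A B \<longleftrightarrow> measure coin ((A - B) \<union> (B - A)) = 0"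

definition cls :: "cantor set \<Rightarrow> cantor set set" where
  "cls A = {B \<in> sets coin. null_eq A B}"

definition MALG :: "cantor set set set" where
  "MALG = cls ` sets coin"

definition malg_dist :: "cantor set set \<Rightarrow> cantor set set \<Rightarrow> real" where
  "malg_dist a b = measure coin (((SOME A. A \<in> a) - (SOME B. B \<in> b)) \<union> ((SOME B. B \<in> b) - (SOME A. A \<in> a)))"

definition malg_top :: "cantor set set topology" where
  "malg_top = mtopology_of (metric (MALG, malg_dist))"

definition nowhere_dense_in :: "'a topology \<Rightarrow> 'a set \<Rightarrow> bool" where
  "nowhere_dense_in X N \<longleftrightarrow> N \<subseteq> topspace X \<and> X interior_of (X closure_of N) = {}"

definition meager_in :: "'a topology \<Rightarrow> 'a set \<Rightarrow> bool" where
  "meager_in X S \<longleftrightarrow> (\<exists>N :: nat \<Rightarrow> 'a set. (\<forall>n. nowhere_dense_in X (N n)) \<and> S \<subseteq> (\<Union>n. N n))"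

definition comeager_in :: "'a topology \<Rightarrow> 'a set \<Rightarrow> bool" where
  "comeager_in X S \<longleftrightarrow> meager_in X (topspace X - S)"

definition Pi03 :: "cantor set \<Rightarrow> bool" where
  "Pi03 S \<longleftrightarrow> (\<exists>F :: nat \<Rightarrow> nat \<Rightarrow> cantor set. (\<forall>m n. closed (F m n)) \<and> S = (\<Inter>m. \<Union>n. F m n))"

definition complete_Pi03 :: "cantor set \<Rightarrow> bool" where
  "complete_Pi03 S \<longleftrightarrow> Pi03 S \<and>
     (\<forall>B. Pi03 B \<longrightarrow> (\<exists>f :: cantor \<Rightarrow> cantor. continuous_on UNIV f \<and> B = f -` S))"

end

theory Submission
  imports Defs
begin


lemma nbhd_open: "open (nbhd x n)"
proof -
  have "open {f::cantor. \<forall>i\<in>{..<n}. f (id i) \<in> {x i}}"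
    by (rule product_topology_basis') (auto intro: discrete_topology_class.open_discrete)
  moreover have "{f::cantor. \<forall>i\<in>{..<n}. f (id i) \<in> {x i}} = nbhd x n"
    by (auto simp: nbhd_def)
  ultimately show ?thesis by simp
qed

lemma open_contains_nbhd:
  assumes "open (U::cantor set)" "x \<in> U"
  shows "\<exists>n. nbhd x n \<subseteq> U"
proof -
  have "openin (product_topology (\<lambda>i. euclidean) UNIV) U"
    using assms unfolding open_fun_def by auto
  from product_topology_open_contains_basis[OF this assms(2)]
  obtain X where H: "x \<in> (\<Pi>\<^sub>E i\<in>UNIV. X i)" "\<And>i. open (X i)"
     "finite {i. X i \<noteq> UNIV}" "(\<Pi>\<^sub>E i\<in>UNIV. X i) \<subseteq> U"
    by auto
  obtain n where n: "{i. X i \<noteq> UNIV} \<subseteq> {..<n}"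
    using H(3) finite_nat_bounded by blast
  have "nbhd x n \<subseteq> (\<Pi>\<^sub>E i\<in>UNIV. X i)"
  proof
    fix y assume y: "y \<in> nbhd x n"
    have "y i \<in> X i" for i
    proof (cases "X i = UNIV")
      case False then have "i < n" using n by auto
      then have "y i = x i" using y by (auto simp: nbhd_def)
      moreover have "x i \<in> X i" using H(1) by (simp add: PiE_UNIV_domain Pi_iff)
      ultimately show ?thesis by simp
    qed auto
    then show "y \<in> (\<Pi>\<^sub>E i\<in>UNIV. X i)" by (simp add: PiE_UNIV_domain)
  qed
  then show ?thesis using H(4) by blast
qed

lemma closed_local:
  assumes "\<And>x. \<exists>n. \<forall>y\<in>nbhd x n. (y \<in> S) = (x \<in> S)"
  shows "closed (S::cantor set)"
  unfolding closed_def
proof (subst open_subopen, intro ballI)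
  fix x assume "x \<in> - S"
  obtain n where "\<forall>y\<in>nbhd x n. (y \<in> S) = (x \<in> S)" using assms by blast
  then have "nbhd x n \<subseteq> - S" using \<open>x \<in> - S\<close> by auto
  moreover have "x \<in> nbhd x n" by (simp add: nbhd_def)
  ultimately show "\<exists>T. open T \<and> x \<in> T \<and> T \<subseteq> - S" using nbhd_open by blast
qed

lemma cont_local:
  fixes h :: "cantor \<Rightarrow> 'b::topological_space"
  assumes "\<And>x. \<exists>n. \<forall>y\<in>nbhd x n. h y = h x"
  shows "continuous_on UNIV h"
proof (subst continuous_on_open_vimage[OF open_UNIV], intro allI impI)
  fix B :: "'b set" assume "open B"
  show "open (h -` B \<inter> UNIV)"
  proof (subst open_subopen, intro ballI)
    fix x assume "x \<in> h -` B \<inter> UNIV"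
    obtain n where "\<forall>y\<in>nbhd x n. h y = h x" using assms by blast
    then have "nbhd x n \<subseteq> h -` B \<inter> UNIV" using \<open>x \<in> h -` B \<inter> UNIV\<close> by auto
    moreover have "x \<in> nbhd x n" by (simp add: nbhd_def)
    ultimately show "\<exists>T. open T \<and> x \<in> T \<and> T \<subseteq> h -` B \<inter> UNIV" using nbhd_open by blast
  qed
qed

lemma cont_cantor:
  fixes f :: "cantor \<Rightarrow> cantor"
  assumes "\<And>x i. \<exists>n. \<forall>y\<in>nbhd x n. f y i = f x i"
  shows "continuous_on UNIV f"
  by (rule continuous_on_coordinatewise_then_product, rule cont_local, rule assms)

lemma prob_coin: "prob_space coin"
  unfolding coin_def by (rule prob_space_PiM) (simp add: prob_space_measure_pmf)

lemma space_coinM: "space (PiM UNIV (\<lambda>_::nat. measure_pmf (pmf_of_set (UNIV :: bool set)))) = UNIV"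
  by (simp add: space_PiM PiE_UNIV_domain)

lemma nbhd_emb: "nbhd x n = prod_emb UNIV (\<lambda>_::nat. measure_pmf (pmf_of_set (UNIV :: bool set))) {..<n} (PiE {..<n} (\<lambda>i. {x i}))"
proof (rule set_eqI)
  fix y :: cantor
  have "restrict y {..<n} \<in> PiE {..<n} (\<lambda>i. {x i}) \<longleftrightarrow> (\<forall>i<n. y i = x i)"
    unfolding restrict_PiE_iff by blast
  moreover have "y \<in> prod_emb UNIV (\<lambda>_::nat. measure_pmf (pmf_of_set (UNIV :: bool set))) {..<n} (PiE {..<n} (\<lambda>i. {x i}))
     \<longleftrightarrow> restrict y {..<n} \<in> PiE {..<n} (\<lambda>i. {x i})"
    unfolding prod_emb_def space_coinM by simp
  ultimately show "y \<in> nbhd x n \<longleftrightarrow> y \<in> prod_emb UNIV (\<lambda>_::nat. measure_pmf (pmf_of_set (UNIV :: bool set))) {..<n} (PiE {..<n} (\<lambda>i. {x i}))"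
    by (simp add: nbhd_def)
qed

lemma nbhd_sets: "nbhd x n \<in> sets coin"
proof -
  have "prod_emb UNIV (\<lambda>_::nat. measure_pmf (pmf_of_set (UNIV :: bool set))) {..<n} (PiE {..<n} (\<lambda>i. {x i}))
     \<in> sets (PiM UNIV (\<lambda>_::nat. measure_pmf (pmf_of_set (UNIV :: bool set))))"
    by (rule sets_PiM_I) simp_all
  then show ?thesis unfolding coin_def by (simp only: nbhd_emb[symmetric])
qed
lemma single_half: "emeasure (measure_pmf (pmf_of_set (UNIV :: bool set))) {b} = ennreal (1/2)"
proof -
  have "pmf (pmf_of_set (UNIV :: bool set)) b = 1/2"
    by (subst pmf_of_set) simp_all
  then show ?thesis by (simp add: emeasure_pmf_single)
qed

lemma nbhd_emeasure: "emeasure coin (nbhd x n) = ennreal ((1/2)^n)"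
proof -
  have "emeasure (PiM UNIV (\<lambda>_::nat. measure_pmf (pmf_of_set (UNIV :: bool set))))
     (prod_emb UNIV (\<lambda>_::nat. measure_pmf (pmf_of_set (UNIV :: bool set))) {..<n} (PiE {..<n} (\<lambda>i. {x i})))
     = (\<Prod>i\<in>{..<n}. emeasure (measure_pmf (pmf_of_set (UNIV :: bool set))) {x i})"
    by (rule emeasure_PiM_emb) (simp_all add: prob_space_measure_pmf)
  also have "\<dots> = (\<Prod>i\<in>{..<n}. ennreal (1/2))" by (simp only: single_half)
  also have "\<dots> = ennreal ((1/2)^n)" by (simp only: prod_constant card_lessThan) (rule ennreal_power, simp)
  finally show ?thesis unfolding coin_def by (simp only: nbhd_emb[symmetric])
qed

lemma nbhd_measure: "measure coin (nbhd x n) = (1/2)^n"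
  using nbhd_emeasure unfolding measure_def by simp




interpretation C: prob_space coin by (rule prob_coin)

definition dens :: "cantor set \<Rightarrow> cantor \<Rightarrow> nat \<Rightarrow> real" where
  "dens A z n = measure coin (A \<inter> nbhd z n) / measure coin (nbhd z n)"

lemma Phi_dens: "Phi A = {x. (\<lambda>n. dens A x n) \<longlonglongrightarrow> 1}"
  unfolding Phi_def dens_def ..

lemma dens_eq: "dens A z n = measure coin (A \<inter> nbhd z n) * 2^n"
  unfolding dens_def nbhd_measure by (simp add: power_divide)

lemma nbhd_cong: "(\<And>i. i < n \<Longrightarrow> y i = z i) \<Longrightarrow> nbhd y n = nbhd z n"
  unfolding nbhd_def by auto

lemma dens_cong: "(\<And>i. i < n \<Longrightarrow> y i = z i) \<Longrightarrow> dens A y n = dens A z n"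
  unfolding dens_def using nbhd_cong by metis

lemma dens_nonneg: "0 \<le> dens A z n"
  unfolding dens_eq by simp

lemma dens_le1: assumes "A \<in> sets coin" shows "dens A z n \<le> 1"
proof -
  have "measure coin (A \<inter> nbhd z n) \<le> measure coin (nbhd z n)"
    by (rule C.finite_measure_mono) (auto simp: nbhd_sets)
  then show ?thesis unfolding dens_def nbhd_measure by simp
qed

lemma nbhd_split:
  "nbhd z n = nbhd (z(n:=True)) (Suc n) \<union> nbhd (z(n:=False)) (Suc n)"
  "nbhd (z(n:=True)) (Suc n) \<inter> nbhd (z(n:=False)) (Suc n) = {}"
  unfolding nbhd_def by (auto simp: less_Suc_eq)

lemma dens_split:
  assumes "A \<in> sets coin"
  shows "dens A (z(n:=True)) (Suc n) + dens A (z(n:=False)) (Suc n) = 2 * dens A z n"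
proof -
  have "measure coin (A \<inter> nbhd z n) = measure coin (A \<inter> nbhd (z(n:=True)) (Suc n)) + measure coin (A \<inter> nbhd (z(n:=False)) (Suc n))"
  proof -
    have "A \<inter> nbhd z n = (A \<inter> nbhd (z(n:=True)) (Suc n)) \<union> (A \<inter> nbhd (z(n:=False)) (Suc n))"
      using nbhd_split(1)[of z n] by blast
    moreover have "(A \<inter> nbhd (z(n:=True)) (Suc n)) \<inter> (A \<inter> nbhd (z(n:=False)) (Suc n)) = {}"
      using nbhd_split(2)[of z n] by blast
    ultimately show ?thesis
      by (metis C.finite_measure_Union sets.Int assms nbhd_sets)
  qed
  then show ?thesis unfolding dens_eq by (simp add: algebra_simps)
qed

lemma dens_child_lower:
  assumes "A \<in> sets coin"
  shows "dens A y (Suc n) \<ge> 2 * dens A y n - 1"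
proof (cases "y n")
  case True
  have e: "y(n:=True) = y" using True by (simp add: fun_upd_idem)
  have "dens A (y(n:=False)) (Suc n) \<le> 1" by (rule dens_le1[OF assms])
  then show ?thesis using dens_split[OF assms, of y n] e by simp
next
  case False
  have e: "y(n:=False) = y" using False by (simp add: fun_upd_idem)
  have "dens A (y(n:=True)) (Suc n) \<le> 1" by (rule dens_le1[OF assms])
  then show ?thesis using dens_split[OF assms, of y n] e by simp
qed

lemma dens_greedy:
  assumes "A \<in> sets coin"
  shows "\<exists>b. dens A (y(n:=b)) (Suc n) \<ge> dens A y n"
proof -
  have "dens A (y(n:=True)) (Suc n) \<ge> dens A y n \<or> dens A (y(n:=False)) (Suc n) \<ge> dens A y n"
    using dens_split[OF assms, of y n] by linarith
  then show ?thesis by blast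
qed

lemma measure_sym_diff_bound:
  assumes "A \<in> sets coin" "B \<in> sets coin" "S \<in> sets coin"
  shows "\<bar>measure coin (A \<inter> S) - measure coin (B \<inter> S)\<bar> \<le> measure coin ((A - B) \<union> (B - A))"
proof -
  have "measure coin (A \<inter> S) \<le> measure coin ((B \<inter> S) \<union> ((A - B) \<union> (B - A)))"
    by (rule C.finite_measure_mono) (use assms in auto)
  also have "\<dots> \<le> measure coin (B \<inter> S) + measure coin ((A - B) \<union> (B - A))"
    by (rule measure_Un_le) (use assms in auto)
  finally have 1: "measure coin (A \<inter> S) \<le> measure coin (B \<inter> S) + measure coin ((A - B) \<union> (B - A))" .
  have "measure coin (B \<inter> S) \<le> measure coin ((A \<inter> S) \<union> ((A - B) \<union> (B - A)))"
    by (rule C.finite_measure_mono) (use assms in auto)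
  also have "\<dots> \<le> measure coin (A \<inter> S) + measure coin ((A - B) \<union> (B - A))"
    by (rule measure_Un_le) (use assms in auto)
  finally have 2: "measure coin (B \<inter> S) \<le> measure coin (A \<inter> S) + measure coin ((A - B) \<union> (B - A))" .
  show ?thesis using 1 2 by linarith
qed

lemma dens_perturb:
  assumes "A \<in> sets coin" "B \<in> sets coin"
  shows "\<bar>dens A z n - dens B z n\<bar> \<le> 2^n * measure coin ((A - B) \<union> (B - A))"
proof -
  have "\<bar>dens A z n - dens B z n\<bar> = \<bar>measure coin (A \<inter> nbhd z n) - measure coin (B \<inter> nbhd z n)\<bar> * 2^n"
    unfolding dens_eq by (simp add: abs_mult left_diff_distrib[symmetric])
  also have "\<dots> \<le> measure coin ((A - B) \<union> (B - A)) * 2^n"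
    by (rule mult_right_mono[OF measure_sym_diff_bound[OF assms nbhd_sets]]) simp
  finally show ?thesis by (simp add: mult.commute)
qed

lemma dens_null_eq:
  assumes "A \<in> sets coin" "B \<in> sets coin" "null_eq A B"
  shows "dens A z n = dens B z n"
  using dens_perturb[OF assms(1,2), of z n] assms(3) unfolding null_eq_def by simp





lemma nbhd_self: "x \<in> nbhd x n" by (simp add: nbhd_def)

lemma nbhd_anti: "m \<le> n \<Longrightarrow> nbhd x n \<subseteq> nbhd x m"
  unfolding nbhd_def by auto

lemma nbhd_mem_cong: "y \<in> nbhd x n \<Longrightarrow> nbhd y n = nbhd x n"
  unfolding nbhd_def by auto

lemma dens_local: "y \<in> nbhd x n \<Longrightarrow> dens A y n = dens A x n"
  by (rule dens_cong) (simp add: nbhd_def)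

lemma Pi03_Phi: "Pi03 (Phi A)"
proof -
  define F where "F = (\<lambda>k N. \<Inter>n\<in>{N..}. {x. \<bar>dens A x n - 1\<bar> \<le> 1 / real (Suc k)})"
  have cl: "closed (F k N)" for k N
    unfolding F_def
  proof (rule closed_INT, rule ballI, rule closed_local)
    fix n x
    show "\<exists>m. \<forall>y\<in>nbhd x m. (y \<in> {x. \<bar>dens A x n - 1\<bar> \<le> 1 / real (Suc k)}) = (x \<in> {x. \<bar>dens A x n - 1\<bar> \<le> 1 / real (Suc k)})"
      by (rule exI[of _ n]) (simp add: dens_local)
  qed
  have eq: "Phi A = (\<Inter>k. \<Union>N. F k N)"
  proof (rule set_eqI)
    fix x
    have "(\<lambda>n. dens A x n) \<longlonglongrightarrow> 1 \<longleftrightarrow> (\<forall>k. \<exists>N. \<forall>n\<ge>N. \<bar>dens A x n - 1\<bar> \<le> 1 / real (Suc k))"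
    proof
      assume L: "(\<lambda>n. dens A x n) \<longlonglongrightarrow> 1"
      show "\<forall>k. \<exists>N. \<forall>n\<ge>N. \<bar>dens A x n - 1\<bar> \<le> 1 / real (Suc k)"
      proof
        fix k
        have "(1::real) / real (Suc k) > 0" by simp
        from LIMSEQ_D[OF L this] obtain N where "\<forall>n\<ge>N. norm (dens A x n - 1) < 1 / real (Suc k)" by blast
        then show "\<exists>N. \<forall>n\<ge>N. \<bar>dens A x n - 1\<bar> \<le> 1 / real (Suc k)" by (auto intro: less_imp_le)
      qed
    next
      assume R: "\<forall>k. \<exists>N. \<forall>n\<ge>N. \<bar>dens A x n - 1\<bar> \<le> 1 / real (Suc k)"
      show "(\<lambda>n. dens A x n) \<longlonglongrightarrow> 1"
      proof (rule LIMSEQ_I)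
        fix r :: real assume "0 < r"
        then obtain k where k: "inverse (real (Suc k)) < r" using reals_Archimedean by blast
        obtain N where "\<forall>n\<ge>N. \<bar>dens A x n - 1\<bar> \<le> 1 / real (Suc k)" using R by blast
        then show "\<exists>no. \<forall>n\<ge>no. norm (dens A x n - 1) < r"
          using k by (auto simp: divide_inverse intro: le_less_trans)
      qed
    qed
    then show "x \<in> Phi A \<longleftrightarrow> x \<in> (\<Inter>k. \<Union>N. F k N)"
      unfolding Phi_dens F_def by (simp add: atLeast_def)
  qed
  show ?thesis unfolding Pi03_def using cl eq by blast
qed

definition P3 :: "cantor set" where
  "P3 = {y. \<forall>m. finite {s. y (prod_encode (m, s))}}"

lemma mono_bounded_finite_changes:
  fixes g :: "nat \<Rightarrow> nat"
  assumes "mono g"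
  shows "finite {s. g (Suc s) \<noteq> g s} \<longleftrightarrow> (\<exists>K. \<forall>s. g s \<le> K)"
proof
  assume "finite {s. g (Suc s) \<noteq> g s}"
  then obtain S0 where S0: "{s. g (Suc s) \<noteq> g s} \<subseteq> {..<S0}" using finite_nat_bounded by blast
  have c: "g (S0 + d) = g S0" for d
  proof (induction d)
    case (Suc d)
    have "g (Suc (S0 + d)) = g (S0 + d)" using S0 by (metis (mono_tags) lessThan_iff mem_Collect_eq not_add_less1 subsetD)
    then show ?case using Suc by simp
  qed simp
  have "g s \<le> g S0" for s
  proof (cases "s \<le> S0")
    case True then show ?thesis using assms by (simp add: monoD)
  next
    case False then obtain d where "s = S0 + d" by (metis le_add_diff_inverse nle_le)
    then show ?thesis using c by simp
  qed
  then show "\<exists>K. \<forall>s. g s \<le> K" by blast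
next
  assume "\<exists>K. \<forall>s. g s \<le> K"
  then obtain K where K: "\<And>s. g s \<le> K" by blast
  have "range g \<subseteq> {..K}" using K by auto
  then have "finite (range g)" by (rule finite_subset) simp
  then obtain S0 where S0: "g S0 = Max (range g)"
    by (metis (mono_tags, lifting) Max_in UNIV_not_empty empty_is_image imageE)
  have gc: "g s = g S0" if "s \<ge> S0" for s
  proof -
    have "g s \<le> g S0" using S0 \<open>finite (range g)\<close> by simp
    moreover have "g S0 \<le> g s" using assms that by (simp add: monoD)
    ultimately show ?thesis by simp
  qed
  have "{s. g (Suc s) \<noteq> g s} \<subseteq> {..<S0}"
  proof (intro subsetI)
    fix s assume s: "s \<in> {s. g (Suc s) \<noteq> g s}"
    show "s \<in> {..<S0}"
    proof (rule ccontr)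
      assume "s \<notin> {..<S0}"
      then have "S0 \<le> s" by simp
      then have "g s = g S0" "g (Suc s) = g S0" using gc[of s] gc[of "Suc s"] by simp_all
      then show False using s by simp
    qed
  qed
  then show "finite {s. g (Suc s) \<noteq> g s}" by (rule finite_subset) simp
qed

lemma reduce_to_P3:
  assumes "Pi03 B"
  shows "\<exists>f :: cantor \<Rightarrow> cantor. continuous_on UNIV f \<and> B = f -` P3"
proof -
  obtain F :: "nat \<Rightarrow> nat \<Rightarrow> cantor set" where Fc: "\<And>m n. closed (F m n)" and BF: "B = (\<Inter>m. \<Union>n. F m n)"
    using assms unfolding Pi03_def by blast
  define G where "G = (\<lambda>m n. \<Union>n'\<in>{..n}. F m n')"
  have Gc: "closed (G m n)" for m n unfolding G_def using Fc by (intro closed_UN) auto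
  have Gmono: "n \<le> n' \<Longrightarrow> G m n \<subseteq> G m n'" for m n n' unfolding G_def by (fastforce intro: le_trans)
  have GU: "(\<Union>n. G m n) = (\<Union>n. F m n)" for m unfolding G_def by auto
  define e where "e = (\<lambda>m s x. card {n. n \<le> s \<and> nbhd x s \<inter> G m n = {}})"
  have e_mono: "mono (\<lambda>s. e m s x)" for m x
  proof (rule monoI)
    fix s s' :: nat assume "s \<le> s'"
    then have "{n. n \<le> s \<and> nbhd x s \<inter> G m n = {}} \<subseteq> {n. n \<le> s' \<and> nbhd x s' \<inter> G m n = {}}"
      using nbhd_anti[of s s' x] by auto
    then show "e m s x \<le> e m s' x" unfolding e_def by (rule card_mono[rotated]) simp
  qed
  have bounded_iff: "(\<exists>K. \<forall>s. e m s x \<le> K) \<longleftrightarrow> x \<in> (\<Union>n. G m n)" for m x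
  proof
    assume "x \<in> (\<Union>n. G m n)"
    then obtain n where n: "x \<in> G m n" by blast
    have "e m s x \<le> n" for s
    proof -
      have "{n'. n' \<le> s \<and> nbhd x s \<inter> G m n' = {}} \<subseteq> {..<n}"
      proof
        fix n' assume "n' \<in> {n'. n' \<le> s \<and> nbhd x s \<inter> G m n' = {}}"
        then have "nbhd x s \<inter> G m n' = {}" by simp
        moreover have "n \<le> n' \<Longrightarrow> x \<in> nbhd x s \<inter> G m n'" using n Gmono nbhd_self by blast
        ultimately show "n' \<in> {..<n}" by (auto simp: not_le)
      qed
      then show ?thesis unfolding e_def by (metis card_lessThan card_mono finite_lessThan)
    qed
    then show "\<exists>K. \<forall>s. e m s x \<le> K" by blast
  next
    assume "\<exists>K. \<forall>s. e m s x \<le> K"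
    then obtain K where K: "\<And>s. e m s x \<le> K" by blast
    show "x \<in> (\<Union>n. G m n)"
    proof (rule ccontr)
      assume "x \<notin> (\<Union>n. G m n)"
      then have "x \<in> - G m K" by blast
      moreover have "open (- G m K)" using Gc by (simp add: open_Compl)
      ultimately obtain s0 where s0: "nbhd x s0 \<subseteq> - G m K" using open_contains_nbhd by blast
      define s where "s = max s0 K"
      have "{..K} \<subseteq> {n. n \<le> s \<and> nbhd x s \<inter> G m n = {}}"
      proof
        fix n assume "n \<in> {..K}"
        then have "n \<le> K" by simp
        then have "G m n \<subseteq> G m K" by (rule Gmono)
        moreover have "nbhd x s \<subseteq> nbhd x s0" by (rule nbhd_anti) (simp add: s_def)
        ultimately have "nbhd x s \<inter> G m n = {}" using s0 by blast
        then show "n \<in> {n. n \<le> s \<and> nbhd x s \<inter> G m n = {}}" using \<open>n \<le> K\<close> by (simp add: s_def)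
      qed
      then have "card {..K} \<le> e m s x" unfolding e_def by (rule card_mono[rotated]) simp
      then show False using K[of s] by simp
    qed
  qed
  define f where "f = (\<lambda>x k. case prod_decode k of (m, s) \<Rightarrow> e m (Suc s) x \<noteq> e m s x)"
  have floc: "\<forall>y\<in>nbhd x (Suc (snd (prod_decode k))). f y k = f x k" for x k
  proof
    fix y assume y: "y \<in> nbhd x (Suc (snd (prod_decode k)))"
    obtain m s where ms: "prod_decode k = (m, s)" by (cases "prod_decode k")
    have 1: "nbhd y (Suc s) = nbhd x (Suc s)" using y ms by (simp add: nbhd_mem_cong)
    have "y \<in> nbhd x s" using y ms nbhd_anti[of s "Suc s" x] by auto
    then have 2: "nbhd y s = nbhd x s" by (rule nbhd_mem_cong)
    show "f y k = f x k" unfolding f_def e_def ms using 1 2 by simp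
  qed
  have fc: "continuous_on UNIV f" by (rule cont_cantor) (use floc in blast)
  have "x \<in> B \<longleftrightarrow> f x \<in> P3" for x
  proof -
    have "f x (prod_encode (m, s)) = (e m (Suc s) x \<noteq> e m s x)" for m s
      unfolding f_def by simp
    then have "x \<in> B \<longleftrightarrow> (\<forall>m. finite {s. e m (Suc s) x \<noteq> e m s x})"
      unfolding BF using GU bounded_iff mono_bounded_finite_changes[OF e_mono] by auto
    then show ?thesis unfolding P3_def using \<open>\<And>m s. f x (prod_encode (m, s)) = _\<close> by simp
  qed
  then have "B = f -` P3" by auto
  then show ?thesis using fc by blast
qed





definition G1 :: "cantor set \<Rightarrow> cantor \<Rightarrow> nat \<Rightarrow> nat \<Rightarrow> nat \<Rightarrow> bool" where
  "G1 A z n k j \<longleftrightarrow> (\<exists>z' n'. n < n' \<and> (\<forall>i<n. z' i = z i) \<and> dens A z' n' > 1 - 1 / real (Suc k) \<and>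
      (\<forall>i. n \<le> i \<and> i \<le> n' \<longrightarrow> dens A z' i > dens A z n - 1 / real (Suc j)))"

definition G2 :: "cantor set \<Rightarrow> cantor \<Rightarrow> nat \<Rightarrow> bool" where
  "G2 A z n \<longleftrightarrow> (\<exists>z' n'. n \<le> n' \<and> (\<forall>i<n. z' i = z i) \<and> dens A z' n' < 1/2)"

definition eps :: "nat \<Rightarrow> real" where "eps m = (1/2) ^ Suc m"

lemma eps_pos: "eps m > 0" unfolding eps_def by simp
lemma eps_le: "eps m \<le> 1/2" unfolding eps_def by (simp add: power_le_one)

locale gen =
  fixes A :: "cantor set"
  assumes Am: "A \<in> sets coin"
    and g1: "\<And>z n k j. G1 A z n k j"
    and g2: "\<And>z n. G2 A z n"
begin

definition climbP where
  "climbP z n k p \<longleftrightarrow> n < snd p \<and> (\<forall>i<n. fst p i = z i) \<and> dens A (fst p) (snd p) > 1 - 1 / real (Suc (Suc k)) \<and>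
      (\<forall>i. n \<le> i \<and> i \<le> snd p \<longrightarrow> dens A (fst p) i > dens A z n - 1 / real (Suc k))"

definition climb where "climb z n k = (SOME p. climbP z n k p)"

lemma climb_spec: "climbP z n k (climb z n k)"
proof -
  from g1[of z n "Suc k" k] obtain z' n' where
    "n < n' \<and> (\<forall>i<n. z' i = z i) \<and> dens A z' n' > 1 - 1 / real (Suc (Suc k)) \<and>
      (\<forall>i. n \<le> i \<and> i \<le> n' \<longrightarrow> dens A z' i > dens A z n - 1 / real (Suc k))"
    unfolding G1_def by blast
  then have "climbP z n k (z', n')" unfolding climbP_def by simp
  then show ?thesis unfolding climb_def by (rule someI)
qed

definition dipwP where
  "dipwP z n p \<longleftrightarrow> n \<le> snd p \<and> (\<forall>i<n. fst p i = z i) \<and> dens A (fst p) (snd p) < 1/2"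

definition dipw where "dipw z n = (SOME p. dipwP z n p)"

lemma dipw_spec: "dipwP z n (dipw z n)"
proof -
  from g2[of z n] obtain z' n' where "n \<le> n' \<and> (\<forall>i<n. z' i = z i) \<and> dens A z' n' < 1/2"
    unfolding G2_def by blast
  then have "dipwP z n (z', n')" unfolding dipwP_def by simp
  then show ?thesis unfolding dipw_def by (rule someI)
qed

definition dip where
  "dip z n m = (fst (dipw z n), LEAST i. n \<le> i \<and> dens A (fst (dipw z n)) i \<le> 1 - eps m)"

lemma dip_spec:
  assumes "dip z n m = (w, i)"
  shows "n \<le> i" "\<forall>l<n. w l = z l" "dens A w i \<le> 1 - eps m"
    "\<forall>l. n \<le> l \<and> l \<le> i \<longrightarrow> dens A w l \<ge> min (dens A z n) (1 - 2 * eps m)"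
proof -
  obtain z' n' where zn: "dipw z n = (z', n')" by (cases "dipw z n")
  have sp: "n \<le> n'" "\<forall>i<n. z' i = z i" "dens A z' n' < 1/2"
    using dipw_spec[of z n] zn unfolding dipwP_def by auto
  have w: "w = z'" and i: "i = (LEAST i. n \<le> i \<and> dens A z' i \<le> 1 - eps m)"
    using assms zn unfolding dip_def by auto
  have ex: "n \<le> n' \<and> dens A z' n' \<le> 1 - eps m" using sp eps_le[of m] by simp
  have P: "n \<le> i \<and> dens A z' i \<le> 1 - eps m" unfolding i by (rule LeastI[of _ n'], rule ex)
  have Lm: "\<And>l. l < i \<Longrightarrow> \<not> (n \<le> l \<and> dens A z' l \<le> 1 - eps m)" unfolding i by (rule not_less_Least)
  show "n \<le> i" using P by simp
  show "\<forall>l<n. w l = z l" using sp w by simp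
  show "dens A w i \<le> 1 - eps m" using P w by simp
  show "\<forall>l. n \<le> l \<and> l \<le> i \<longrightarrow> dens A w l \<ge> min (dens A z n) (1 - 2 * eps m)"
  proof (intro allI impI)
    fix l assume l: "n \<le> l \<and> l \<le> i"
    show "dens A w l \<ge> min (dens A z n) (1 - 2 * eps m)"
    proof (cases "l = n")
      case True
      have "dens A w n = dens A z n" by (rule dens_cong) (use sp w in simp)
      then show ?thesis using True by simp
    next
      case False
      then obtain l' where l': "l = Suc l'" "n \<le> l'" using l by (metis le_neq_implies_less less_imp_Suc_add le_add1 add_Suc)
      then have "l' < i" using l by simp
      then have "dens A z' l' > 1 - eps m" using Lm[of l'] l' by simp
      moreover have "dens A z' (Suc l') \<ge> 2 * dens A z' l' - 1" by (rule dens_child_lower[OF Am])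
      ultimately have "dens A w l \<ge> 1 - 2 * eps m" using w l' by simp
      then show ?thesis by simp
    qed
  qed
qed

definition step :: "bool \<Rightarrow> nat \<Rightarrow> cantor \<times> nat \<Rightarrow> cantor \<times> nat" where
  "step b k p = (let q = (if b then dip (fst p) (snd p) (fst (prod_decode k)) else p) in climb (fst q) (snd q) k)"

primrec st :: "cantor \<Rightarrow> nat \<Rightarrow> cantor \<times> nat" where
  "st y 0 = (\<lambda>_. False, 0)"
| "st y (Suc k) = step (y k) k (st y k)"

lemma step_spec:
  assumes "step b k (z, n) = (z2, n2)"
  shows "n < n2" "\<forall>i<n. z2 i = z i" "dens A z2 n2 > 1 - 1 / real (Suc (Suc k))"
    "\<forall>l. n \<le> l \<and> l \<le> n2 \<longrightarrow> dens A z2 l \<ge> min (dens A z n) (if b then 1 - 2 * eps (fst (prod_decode k)) else 1) - 1 / real (Suc k)"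
    "b \<Longrightarrow> \<exists>l. n \<le> l \<and> l \<le> n2 \<and> dens A z2 l \<le> 1 - eps (fst (prod_decode k))"
proof -
  define m where "m = fst (prod_decode k)"
  have kpos: "1 / real (Suc k) \<ge> 0" by simp
  have "(n < n2 \<and> (\<forall>i<n. z2 i = z i) \<and> dens A z2 n2 > 1 - 1 / real (Suc (Suc k)) \<and>
    (\<forall>l. n \<le> l \<and> l \<le> n2 \<longrightarrow> dens A z2 l \<ge> min (dens A z n) (if b then 1 - 2 * eps m else 1) - 1 / real (Suc k))) \<and>
    (b \<longrightarrow> (\<exists>l. n \<le> l \<and> l \<le> n2 \<and> dens A z2 l \<le> 1 - eps m))"
  proof (cases b)
    case True
    obtain w i where wi: "dip z n m = (w, i)" by (cases "dip z n m")
    have d: "n \<le> i" "\<forall>l<n. w l = z l" "dens A w i \<le> 1 - eps m"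
      "\<forall>l. n \<le> l \<and> l \<le> i \<longrightarrow> dens A w l \<ge> min (dens A z n) (1 - 2 * eps m)"
      using dip_spec[OF wi] by auto
    have "climb w i k = (z2, n2)" using assms True wi unfolding step_def m_def by simp
    then have c: "climbP w i k (z2, n2)" using climb_spec[of w i k] by simp
    then have c1: "i < n2" "\<forall>l<i. z2 l = w l" "dens A z2 n2 > 1 - 1 / real (Suc (Suc k))"
      "\<forall>l. i \<le> l \<and> l \<le> n2 \<longrightarrow> dens A z2 l > dens A w i - 1 / real (Suc k)"
      unfolding climbP_def by auto
    have agree_le: "dens A z2 l = dens A w l" if "l \<le> i" for l
      by (rule dens_cong) (use c1(2) that in simp)
    have seg: "dens A z2 l \<ge> min (dens A z n) (1 - 2 * eps m) - 1 / real (Suc k)" if "n \<le> l" "l \<le> n2" for l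
    proof (cases "l \<le> i")
      case True
      have "dens A w l \<ge> min (dens A z n) (1 - 2 * eps m)" using d(4) that True by simp
      then show ?thesis using agree_le[OF True] kpos by linarith
    next
      case False
      then have "dens A z2 l > dens A w i - 1 / real (Suc k)" using c1(4) that by simp
      moreover have "dens A w i \<ge> min (dens A z n) (1 - 2 * eps m)" using d(1,4) by simp
      ultimately show ?thesis by linarith
    qed
    have e1: "n < n2" using d(1) c1(1) by simp
    have e2: "\<forall>l<n. z2 l = z l" using d(1,2) c1(2) by simp
    have e4: "\<forall>l. n \<le> l \<and> l \<le> n2 \<longrightarrow> dens A z2 l \<ge> min (dens A z n) (if b then 1 - 2 * eps m else 1) - 1 / real (Suc k)"
      using seg True by simp
    have e5: "\<exists>l. n \<le> l \<and> l \<le> n2 \<and> dens A z2 l \<le> 1 - eps m"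
      using d(1,3) c1(1) agree_le[of i] by (intro exI[of _ i]) simp
    show ?thesis using e1 e2 c1(3) e4 e5 by blast
  next
    case False
    have "climb z n k = (z2, n2)" using assms False unfolding step_def by simp
    then have c: "climbP z n k (z2, n2)" using climb_spec[of z n k] by simp
    then have c1: "n < n2" "\<forall>l<n. z2 l = z l" "dens A z2 n2 > 1 - 1 / real (Suc (Suc k))"
      "\<forall>l. n \<le> l \<and> l \<le> n2 \<longrightarrow> dens A z2 l > dens A z n - 1 / real (Suc k)"
      unfolding climbP_def by auto
    have e4: "\<forall>l. n \<le> l \<and> l \<le> n2 \<longrightarrow> dens A z2 l \<ge> min (dens A z n) (if b then 1 - 2 * eps m else 1) - 1 / real (Suc k)"
    proof (intro allI impI)
      fix l assume "n \<le> l \<and> l \<le> n2"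
      then have "dens A z2 l > dens A z n - 1 / real (Suc k)" using c1(4) by simp
      then show "dens A z2 l \<ge> min (dens A z n) (if b then 1 - 2 * eps m else 1) - 1 / real (Suc k)"
        using False by simp
    qed
    show ?thesis using c1(1,2,3) e4 False by blast
  qed
  then show "n < n2" "\<forall>i<n. z2 i = z i" "dens A z2 n2 > 1 - 1 / real (Suc (Suc k))"
    "\<forall>l. n \<le> l \<and> l \<le> n2 \<longrightarrow> dens A z2 l \<ge> min (dens A z n) (if b then 1 - 2 * eps (fst (prod_decode k)) else 1) - 1 / real (Suc k)"
    "b \<Longrightarrow> \<exists>l. n \<le> l \<and> l \<le> n2 \<and> dens A z2 l \<le> 1 - eps (fst (prod_decode k))"
    unfolding m_def by blast+
qed

abbreviation Z where "Z y k \<equiv> fst (st y k)"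
abbreviation Nn where "Nn y k \<equiv> snd (st y k)"

lemma st_props:
  shows "Nn y k < Nn y (Suc k)" "\<forall>i<Nn y k. Z y (Suc k) i = Z y k i"
    "dens A (Z y (Suc k)) (Nn y (Suc k)) > 1 - 1 / real (Suc (Suc k))"
    "\<forall>l. Nn y k \<le> l \<and> l \<le> Nn y (Suc k) \<longrightarrow> dens A (Z y (Suc k)) l \<ge>
        min (dens A (Z y k) (Nn y k)) (if y k then 1 - 2 * eps (fst (prod_decode k)) else 1) - 1 / real (Suc k)"
    "y k \<Longrightarrow> \<exists>l. Nn y k \<le> l \<and> l \<le> Nn y (Suc k) \<and> dens A (Z y (Suc k)) l \<le> 1 - eps (fst (prod_decode k))"
proof -
  have e: "step (y k) k (Z y k, Nn y k) = (Z y (Suc k), Nn y (Suc k))" by simp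
  note S = step_spec[OF e]
  show "Nn y k < Nn y (Suc k)" by (rule S(1))
  show "\<forall>i<Nn y k. Z y (Suc k) i = Z y k i" by (rule S(2))
  show "dens A (Z y (Suc k)) (Nn y (Suc k)) > 1 - 1 / real (Suc (Suc k))" by (rule S(3))
  show "\<forall>l. Nn y k \<le> l \<and> l \<le> Nn y (Suc k) \<longrightarrow> dens A (Z y (Suc k)) l \<ge>
        min (dens A (Z y k) (Nn y k)) (if y k then 1 - 2 * eps (fst (prod_decode k)) else 1) - 1 / real (Suc k)" by (rule S(4))
  show "y k \<Longrightarrow> \<exists>l. Nn y k \<le> l \<and> l \<le> Nn y (Suc k) \<and> dens A (Z y (Suc k)) l \<le> 1 - eps (fst (prod_decode k))"
    by (rule S(5))
qed

lemma Nn_ge: "k \<le> Nn y k"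
proof (induction k)
  case (Suc k) then show ?case using st_props(1)[where y=y and k="k"] by simp
qed simp

lemma Nn_mono: "k \<le> k' \<Longrightarrow> Nn y k \<le> Nn y k'"
proof (induction k' rule: dec_induct)
  case (step k') then show ?case using st_props(1)[where y=y and k="k'"] by simp
qed simp

lemma Z_agree: "k \<le> k' \<Longrightarrow> i < Nn y k \<Longrightarrow> Z y k' i = Z y k i"
proof (induction k' rule: dec_induct)
  case (step k')
  have "Nn y k \<le> Nn y k'" using Nn_mono step(1) by simp
  then have "Z y (Suc k') i = Z y k' i" using st_props(2)[where y=y and k="k'"] step(4) by simp
  then show ?case using step by simp
qed simp

definition out :: "cantor \<Rightarrow> cantor" where "out y = (\<lambda>i. Z y (Suc i) i)"

lemma out_agree: "i < Nn y k \<Longrightarrow> out y i = Z y k i"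
proof (cases "Suc i \<le> k")
  case True
  assume "i < Nn y k"
  have "i < Nn y (Suc i)" using Nn_ge[of "Suc i" y] by simp
  then show ?thesis unfolding out_def using Z_agree[OF True] by simp
next
  case False
  assume "i < Nn y k"
  then show ?thesis unfolding out_def using Z_agree[of k "Suc i" i y] False by simp
qed

lemma dens_out: "l \<le> Nn y k \<Longrightarrow> dens A (out y) l = dens A (Z y k) l"
  by (rule dens_cong) (simp add: out_agree)

lemma st_cong: "(\<And>j. j < k \<Longrightarrow> y j = y' j) \<Longrightarrow> st y k = st y' k"
  by (induction k) auto

lemma out_cont: "continuous_on UNIV out"
proof (rule cont_cantor)
  fix y :: cantor and i
  show "\<exists>n. \<forall>y'\<in>nbhd y n. out y' i = out y i"
  proof (rule exI[of _ "Suc i"], intro ballI)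
    fix y' assume "y' \<in> nbhd y (Suc i)"
    then have "st y' (Suc i) = st y (Suc i)" by (intro st_cong) (simp add: nbhd_def)
    then show "out y' i = out y i" unfolding out_def by simp
  qed
qed

lemma find_seg:
  assumes "Nn y K \<le> l"
  shows "\<exists>k. K \<le> k \<and> Nn y k \<le> l \<and> l \<le> Nn y (Suc k)"
proof -
  have ex: "\<exists>k. l < Nn y (Suc k)" using Nn_ge[of "Suc l" y] by (intro exI[of _ l]) simp
  define k where "k = (LEAST k. l < Nn y (Suc k))"
  have k1: "l < Nn y (Suc k)" unfolding k_def by (rule LeastI_ex[OF ex])
  have k2: "Nn y k \<le> l"
  proof (cases k)
    case 0 then show ?thesis by simp
  next
    case (Suc k')
    then have "\<not> l < Nn y (Suc k')" unfolding k_def by (metis Suc k_def lessI not_less_Least)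
    then show ?thesis using Suc by simp
  qed
  have "K \<le> k"
  proof (rule ccontr)
    assume "\<not> K \<le> k"
    then have "Nn y (Suc k) \<le> Nn y K" by (intro Nn_mono) simp
    then show False using k1 assms by simp
  qed
  then show ?thesis using k1 k2 by (intro exI[of _ k]) simp
qed

lemma lower_bound:
  assumes "1 \<le> k" "Nn y k \<le> l" "l \<le> Nn y (Suc k)"
  shows "dens A (out y) l \<ge> 1 - 2 / real (Suc k) - (if y k then 2 * eps (fst (prod_decode k)) else 0)"
proof -
  obtain k' where k': "k = Suc k'" using assms(1) by (cases k) auto
  have a: "dens A (Z y k) (Nn y k) > 1 - 1 / real (Suc k)" using st_props(3)[where y=y and k="k'"] k' by simp
  have b: "dens A (Z y (Suc k)) l \<ge>
        min (dens A (Z y k) (Nn y k)) (if y k then 1 - 2 * eps (fst (prod_decode k)) else 1) - 1 / real (Suc k)"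
    using st_props(4)[where y=y and k="k"] assms by simp
  have c: "dens A (out y) l = dens A (Z y (Suc k)) l" by (rule dens_out[OF assms(3)])
  define t where "t = 1 / real (Suc k)"
  define e where "e = eps (fst (prod_decode k))"
  have t0: "t \<ge> 0" unfolding t_def by simp
  have "2 / real (Suc k) = t + t" unfolding t_def by (simp add: field_simps)
  moreover have "min (dens A (Z y k) (Nn y k)) (if y k then 1 - 2 * e else 1) \<ge> 1 - t - (if y k then 2 * e else 0)"
    using a t0 eps_pos[of "fst (prod_decode k)"] unfolding t_def[symmetric] e_def[symmetric] by (auto simp: min_def)
  ultimately show ?thesis using b c unfolding t_def[symmetric] e_def[symmetric] by linarith
qed

lemma eps_mono: "m \<le> m' \<Longrightarrow> eps m' \<le> eps m"
  unfolding eps_def by (rule power_decreasing) auto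

lemma P3_small:
  assumes "y \<in> P3" "r > 0"
  shows "\<exists>K. \<forall>k\<ge>K. 2 / real (Suc k) + (if y k then 2 * eps (fst (prod_decode k)) else 0) < r"
proof -
  obtain M where M: "(1/2::real) ^ M < r / 2" using real_arch_pow_inv[of "r/2" "1/2"] assms(2) by auto
  define S where "S = {k. y k \<and> fst (prod_decode k) \<le> M}"
  have "S \<subseteq> prod_encode ` (\<Union>m\<in>{..M}. {m} \<times> {s. y (prod_encode (m, s))})"
  proof
    fix k assume "k \<in> S"
    obtain m s where ms: "prod_decode k = (m, s)" by (cases "prod_decode k")
    have "k = prod_encode (m, s)" using ms by (metis prod_decode_inverse)
    then show "k \<in> prod_encode ` (\<Union>m\<in>{..M}. {m} \<times> {s. y (prod_encode (m, s))})"
      using \<open>k \<in> S\<close> ms unfolding S_def by force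
  qed
  moreover have "finite (\<Union>m\<in>{..M}. {m} \<times> {s. y (prod_encode (m, s))})"
    using assms(1) unfolding P3_def by auto
  ultimately have "finite S" by (meson finite_imageI finite_subset)
  then obtain K1 where K1: "S \<subseteq> {..<K1}" using finite_nat_bounded by blast
  obtain K2 :: nat where K2: "4 / r < real K2" using reals_Archimedean2 by blast
  have "2 / real (Suc k) + (if y k then 2 * eps (fst (prod_decode k)) else 0) < r" if "k \<ge> max K1 K2" for k
  proof -
    have "2 / real (Suc k) < r / 2"
    proof -
      have "4 / r < real (Suc k)" using K2 that by simp
      then have "4 < r * real (Suc k)" using assms(2) by (simp add: field_simps)
      then show ?thesis by (simp add: field_simps)
    qed
    moreover have "(if y k then 2 * eps (fst (prod_decode k)) else 0) < r / 2"
    proof (cases "y k")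
      case True
      then have "k \<notin> S" using K1 that by auto
      then have "M < fst (prod_decode k)" using True unfolding S_def by auto
      then have "eps (fst (prod_decode k)) \<le> eps M" by (intro eps_mono) simp
      moreover have "2 * eps M = (1/2) ^ M" unfolding eps_def by simp
      ultimately show ?thesis using True M by simp
    qed (use assms(2) in simp)
    ultimately show ?thesis by simp
  qed
  then show ?thesis by blast
qed

lemma out_Phi_iff: "out y \<in> Phi A \<longleftrightarrow> y \<in> P3"
proof
  assume yP: "y \<in> P3"
  show "out y \<in> Phi A" unfolding Phi_dens
  proof (simp, rule LIMSEQ_I)
    fix r :: real assume r: "0 < r"
    obtain K where K: "\<And>k. k \<ge> K \<Longrightarrow> 2 / real (Suc k) + (if y k then 2 * eps (fst (prod_decode k)) else 0) < r"
      using P3_small[OF yP r] by blast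
    have "norm (dens A (out y) l - 1) < r" if lge: "l \<ge> Nn y (max K 1)" for l
    proof -
      obtain k where k: "max K 1 \<le> k" "Nn y k \<le> l" "l \<le> Nn y (Suc k)" using find_seg[OF lge] by blast
      have "dens A (out y) l \<ge> 1 - 2 / real (Suc k) - (if y k then 2 * eps (fst (prod_decode k)) else 0)"
        using lower_bound[of k y l] k by simp
      moreover have "dens A (out y) l \<le> 1" by (rule dens_le1[OF Am])
      moreover have "2 / real (Suc k) + (if y k then 2 * eps (fst (prod_decode k)) else 0) < r" using K k(1) by simp
      ultimately show ?thesis by simp
    qed
    then show "\<exists>no. \<forall>n\<ge>no. norm (dens A (out y) n - 1) < r" by blast
  qed
next
  assume "out y \<in> Phi A"
  then have L: "(\<lambda>n. dens A (out y) n) \<longlonglongrightarrow> 1" unfolding Phi_dens by simp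
  show "y \<in> P3" unfolding P3_def mem_Collect_eq
  proof (rule allI, rule ccontr)
    fix m assume inf: "infinite {s. y (prod_encode (m, s))}"
    obtain N where N: "\<And>n. n \<ge> N \<Longrightarrow> norm (dens A (out y) n - 1) < eps m"
      using LIMSEQ_D[OF L eps_pos[of m]] by blast
    obtain s where s: "N \<le> s" "y (prod_encode (m, s))"
      using inf unfolding infinite_nat_iff_unbounded_le by blast
    define k where "k = prod_encode (m, s)"
    have "y k" using s k_def by simp
    then obtain l where l: "Nn y k \<le> l" "l \<le> Nn y (Suc k)" "dens A (Z y (Suc k)) l \<le> 1 - eps m"
      using st_props(5)[where y=y and k=k] unfolding k_def by auto
    have "N \<le> l" using s(1) le_prod_encode_2[of s m] Nn_ge[of k y] l(1) unfolding k_def by linarith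
    moreover have "dens A (out y) l \<le> 1 - eps m" using dens_out[OF l(2)] l(3) by simp
    ultimately show False using N[of l] by simp
  qed
qed

lemma complete: "complete_Pi03 (Phi A)"
  unfolding complete_Pi03_def
proof (intro conjI allI impI)
  show "Pi03 (Phi A)" by (rule Pi03_Phi)
  fix B assume "Pi03 B"
  then obtain f where f: "continuous_on UNIV f" "B = f -` P3" using reduce_to_P3 by blast
  have "continuous_on UNIV (out \<circ> f)"
    using f(1) out_cont by (metis continuous_on_compose continuous_on_subset subset_UNIV)
  moreover have "B = (out \<circ> f) -` Phi A" using f(2) out_Phi_iff by auto
  ultimately show "\<exists>f. continuous_on UNIV f \<and> B = f -` Phi A" by blast
qed


end



definition rep :: "cantor set set \<Rightarrow> cantor set" where "rep a = (SOME A. A \<in> a)"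

lemma symd_tri:
  assumes "A \<in> sets coin" "B \<in> sets coin" "C \<in> sets coin"
  shows "measure coin ((A - C) \<union> (C - A)) \<le> measure coin ((A - B) \<union> (B - A)) + measure coin ((B - C) \<union> (C - B))"
proof -
  have "measure coin ((A - C) \<union> (C - A)) \<le> measure coin (((A - B) \<union> (B - A)) \<union> ((B - C) \<union> (C - B)))"
    by (rule C.finite_measure_mono) (use assms in auto)
  also have "\<dots> \<le> measure coin ((A - B) \<union> (B - A)) + measure coin ((B - C) \<union> (C - B))"
    by (rule measure_Un_le) (use assms in auto)
  finally show ?thesis .
qed

lemma null_eq_refl: "null_eq A A" unfolding null_eq_def by simp
lemma null_eq_sym: "null_eq A B \<Longrightarrow> null_eq B A" unfolding null_eq_def by (simp add: Un_commute)
lemma null_eq_trans: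
  assumes "A \<in> sets coin" "B \<in> sets coin" "C \<in> sets coin" "null_eq A B" "null_eq B C"
  shows "null_eq A C"
  using symd_tri[OF assms(1-3)] assms(4,5) measure_nonneg[of coin "(A - C) \<union> (C - A)"]
  unfolding null_eq_def by linarith

lemma mem_cls: "A \<in> cls S \<Longrightarrow> A \<in> sets coin \<and> null_eq S A" unfolding cls_def by simp

lemma cls_eq:
  assumes "S \<in> sets coin" "T \<in> sets coin" "null_eq S T"
  shows "cls S = cls T"
  unfolding cls_def using assms null_eq_trans null_eq_sym by blast

lemma MALG_rep:
  assumes "a \<in> MALG"
  shows "rep a \<in> a" "rep a \<in> sets coin" "a = cls (rep a)"
proof -
  obtain S where S: "S \<in> sets coin" "a = cls S" using assms unfolding MALG_def by blast
  have "S \<in> a" using S null_eq_refl unfolding cls_def by simp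
  then show ra: "rep a \<in> a" unfolding rep_def by (rule someI)
  then show "rep a \<in> sets coin" using S mem_cls by blast
  show "a = cls (rep a)" using S ra mem_cls cls_eq by metis
qed

lemma MALG_mem:
  assumes "a \<in> MALG" "A \<in> a"
  shows "A \<in> sets coin" "null_eq (rep a) A"
proof -
  have "A \<in> cls (rep a)" using assms MALG_rep(3) by blast
  then show "A \<in> sets coin" "null_eq (rep a) A" using mem_cls by blast+
qed

lemma malg_dist_rep: "malg_dist a b = measure coin ((rep a - rep b) \<union> (rep b - rep a))"
  unfolding malg_dist_def rep_def ..

lemma cls_MALG: "S \<in> sets coin \<Longrightarrow> cls S \<in> MALG" unfolding MALG_def by blast

lemma rep_cls:
  assumes "S \<in> sets coin" shows "null_eq S (rep (cls S))" "rep (cls S) \<in> sets coin"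
  using MALG_rep[OF cls_MALG[OF assms]] mem_cls by blast+

lemma MALG_metric: "Metric_space MALG malg_dist"
proof
  fix x y z
  show "0 \<le> malg_dist x y" unfolding malg_dist_rep by simp
  show "malg_dist x y = malg_dist y x" unfolding malg_dist_rep by (simp add: Un_commute)
  assume x: "x \<in> MALG" and y: "y \<in> MALG"
  show "malg_dist x y = 0 \<longleftrightarrow> x = y"
  proof
    assume "malg_dist x y = 0"
    then have "null_eq (rep x) (rep y)" unfolding malg_dist_rep null_eq_def .
    then show "x = y" using MALG_rep[OF x] MALG_rep[OF y] cls_eq by metis
  next
    assume "x = y" then show "malg_dist x y = 0" unfolding malg_dist_rep by simp
  qed
  assume z: "z \<in> MALG"
  show "malg_dist x z \<le> malg_dist x y + malg_dist y z"
    unfolding malg_dist_rep by (rule symd_tri[OF MALG_rep(2)[OF x] MALG_rep(2)[OF y] MALG_rep(2)[OF z]])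
qed

interpretation MM: Metric_space MALG malg_dist by (rule MALG_metric)

lemma malg_top_eq: "malg_top = MM.mtopology"
  unfolding malg_top_def by simp





lemma dens_fun_null: "A \<in> sets coin \<Longrightarrow> B \<in> sets coin \<Longrightarrow> null_eq A B \<Longrightarrow> dens A = dens B"
  using dens_null_eq by blast

lemma G1_null: "A \<in> sets coin \<Longrightarrow> B \<in> sets coin \<Longrightarrow> null_eq A B \<Longrightarrow> G1 A z n k j = G1 B z n k j"
  unfolding G1_def by (simp only: dens_fun_null)

lemma G2_null: "A \<in> sets coin \<Longrightarrow> B \<in> sets coin \<Longrightarrow> null_eq A B \<Longrightarrow> G2 A z n = G2 B z n"
  unfolding G2_def by (simp only: dens_fun_null)

lemma G1_prefix:
  assumes "G1 A z n k j" "\<And>i. i < n \<Longrightarrow> z2 i = z i"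
  shows "G1 A z2 n k j"
proof -
  have d: "dens A z2 n = dens A z n" by (rule dens_cong) (use assms(2) in simp)
  show ?thesis using assms(1) unfolding G1_def d using assms(2) by metis
qed

lemma G2_prefix:
  assumes "G2 A z n" "\<And>i. i < n \<Longrightarrow> z2 i = z i"
  shows "G2 A z2 n"
  using assms unfolding G2_def by metis

lemma dens_perturb_le:
  assumes "A \<in> sets coin" "B \<in> sets coin" "i \<le> N"
  shows "\<bar>dens A z i - dens B z i\<bar> \<le> 2^N * measure coin ((A - B) \<union> (B - A))"
proof -
  have "(2::real)^i \<le> 2^N" using assms(3) by (rule power_increasing) simp
  then have "2^i * measure coin ((A - B) \<union> (B - A)) \<le> 2^N * measure coin ((A - B) \<union> (B - A))"
    by (rule mult_right_mono) simp
  then show ?thesis using dens_perturb[OF assms(1,2), of z i] by linarith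
qed

lemma G1_open:
  assumes A: "A \<in> sets coin" and g: "G1 A z n k j"
  shows "\<exists>r>0. \<forall>B\<in>sets coin. measure coin ((A - B) \<union> (B - A)) < r \<longrightarrow> G1 B z n k j"
proof -
  obtain z' n' where w: "n < n'" "\<forall>i<n. z' i = z i" "dens A z' n' > 1 - 1 / real (Suc k)"
      "\<forall>i. n \<le> i \<and> i \<le> n' \<longrightarrow> dens A z' i > dens A z n - 1 / real (Suc j)"
    using g unfolding G1_def by blast
  define g where "g = (\<lambda>i. dens A z' i - dens A z n + 1 / real (Suc j))"
  define s where "s = min (dens A z' n' - (1 - 1 / real (Suc k))) (Min (g ` {n..n'}))"
  have fin: "finite (g ` {n..n'})" "g ` {n..n'} \<noteq> {}" using w(1) by auto
  have "Min (g ` {n..n'}) > 0" using fin w(4) unfolding g_def by (subst Min_gr_iff) auto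
  then have s0: "s > 0" unfolding s_def using w(3) by simp
  have sg: "s \<le> g i" if "n \<le> i" "i \<le> n'" for i
  proof -
    have "Min (g ` {n..n'}) \<le> g i" using fin(1) that by (intro Min_le) auto
    then show ?thesis unfolding s_def by simp
  qed
  define r where "r = s / (2 * 2^n')"
  have r0: "r > 0" unfolding r_def using s0 by simp
  have "G1 B z n k j" if B: "B \<in> sets coin" "measure coin ((A - B) \<union> (B - A)) < r" for B
  proof -
    have small: "2^n' * measure coin ((A - B) \<union> (B - A)) < s / 2"
      using B(2) unfolding r_def by (simp add: field_simps)
    have close: "\<bar>dens A y i - dens B y i\<bar> < s / 2" if "i \<le> n'" for y i
      using dens_perturb_le[OF A B(1) that, of y] small by linarith
    have "dens B z' n' > 1 - 1 / real (Suc k)"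
    proof -
      have "s \<le> dens A z' n' - (1 - 1 / real (Suc k))" unfolding s_def by simp
      then show ?thesis using close[of n' z'] s0 by linarith
    qed
    moreover have "dens B z' i > dens B z n - 1 / real (Suc j)" if "n \<le> i" "i \<le> n'" for i
      using sg[OF that] close[OF that(2), of z'] close[of n z] w(1) unfolding g_def by linarith
    ultimately show ?thesis unfolding G1_def using w(1,2) by blast
  qed
  then show ?thesis using r0 by blast
qed

lemma G2_open:
  assumes A: "A \<in> sets coin" and g: "G2 A z n"
  shows "\<exists>r>0. \<forall>B\<in>sets coin. measure coin ((A - B) \<union> (B - A)) < r \<longrightarrow> G2 B z n"
proof -
  obtain z' n' where w: "n \<le> n'" "\<forall>i<n. z' i = z i" "dens A z' n' < 1/2"
    using g unfolding G2_def by blast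
  define s where "s = 1/2 - dens A z' n'"
  have s0: "s > 0" using w(3) unfolding s_def by simp
  define r where "r = s / 2^n'"
  have r0: "r > 0" unfolding r_def using s0 by simp
  have "G2 B z n" if B: "B \<in> sets coin" "measure coin ((A - B) \<union> (B - A)) < r" for B
  proof -
    have "2^n' * measure coin ((A - B) \<union> (B - A)) < s"
      using B(2) unfolding r_def by (simp add: field_simps)
    then have "dens B z' n' < 1/2" using dens_perturb_le[OF A B(1) order_refl, of z' n'] unfolding s_def by linarith
    then show ?thesis unfolding G2_def using w(1,2) by blast
  qed
  then show ?thesis using r0 by blast
qed





definition gch :: "cantor set \<Rightarrow> cantor \<Rightarrow> nat \<Rightarrow> bool" where
  "gch A y m = (SOME b. dens A (y(m:=b)) (Suc m) \<ge> dens A y m)"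

primrec gp :: "cantor set \<Rightarrow> cantor \<Rightarrow> nat \<Rightarrow> nat \<Rightarrow> cantor" where
  "gp A z n 0 = z"
| "gp A z n (Suc s) = (gp A z n s)(n + s := gch A (gp A z n s) (n + s))"

lemma gp_step:
  assumes "A \<in> sets coin"
  shows "dens A (gp A z n (Suc s)) (n + Suc s) \<ge> dens A (gp A z n s) (n + s)"
proof -
  have "dens A ((gp A z n s)(n + s := gch A (gp A z n s) (n + s))) (Suc (n + s)) \<ge> dens A (gp A z n s) (n + s)"
    unfolding gch_def by (rule someI_ex[OF dens_greedy[OF assms]])
  then show ?thesis by simp
qed

lemma gp_agree: "s \<le> s' \<Longrightarrow> i < n + s \<Longrightarrow> gp A z n s' i = gp A z n s i"
proof (induction s' rule: dec_induct)
  case (step s') then show ?case by simp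
qed simp

lemma gp_dens:
  assumes "A \<in> sets coin"
  shows "dens A (gp A z n s) (n + s) \<ge> dens A z n"
proof (induction s)
  case (Suc s)
  have "dens A (gp A z n (Suc s)) (n + Suc s) \<ge> dens A (gp A z n s) (n + s)" by (rule gp_step[OF assms])
  then show ?case using Suc.IH by linarith
qed simp

lemma dens_mono_set:
  assumes "A \<subseteq> B" "B \<in> sets coin"
  shows "dens A z m \<le> dens B z m"
proof -
  have "measure coin (A \<inter> nbhd z m) \<le> measure coin (B \<inter> nbhd z m)"
    by (rule C.finite_measure_mono) (use assms nbhd_sets in auto)
  then show ?thesis unfolding dens_eq by simp
qed

lemma dens_full:
  assumes "nbhd z m \<subseteq> B"
  shows "dens B z m = 1"
proof -
  have "B \<inter> nbhd z m = nbhd z m" using assms by blast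
  then show ?thesis unfolding dens_def by (simp add: nbhd_measure)
qed

lemma dens_empty:
  assumes "B \<inter> nbhd z m = {}"
  shows "dens B z m = 0"
  unfolding dens_def using assms by simp

lemma small_pow: "r > 0 \<Longrightarrow> \<exists>L::nat. L \<ge> 1 \<and> (1/2::real)^L < r"
proof -
  assume "r > 0"
  then obtain L where "(1/2::real)^L < r" using real_arch_pow_inv[of r "1/2"] by auto
  moreover have "(1/2::real)^(Suc L) \<le> (1/2)^L" by (rule power_decreasing) auto
  ultimately have "(1/2::real)^(Suc L) < r" by linarith
  then show ?thesis by (intro exI[of _ "Suc L"]) (simp only: le_add1 Suc_eq_plus1_left simp_thms)
qed

lemma G1_dense:
  assumes A: "A \<in> sets coin" and r: "r > 0"
  shows "\<exists>B\<in>sets coin. measure coin ((A - B) \<union> (B - A)) < r \<and> G1 B z n k j"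
proof -
  obtain L :: nat where L: "L \<ge> 1" "(1/2::real)^L < min r (1 / real (Suc j))"
    using small_pow[of "min r (1 / real (Suc j))"] r by auto
  define w where "w = gp A z n L"
  define n' where "n' = n + L"
  define B where "B = A \<union> nbhd w n'"
  have Bs: "B \<in> sets coin" unfolding B_def using A nbhd_sets by auto
  have "(A - B) \<union> (B - A) \<subseteq> nbhd w n'" unfolding B_def by auto
  then have "measure coin ((A - B) \<union> (B - A)) \<le> measure coin (nbhd w n')"
    by (rule C.finite_measure_mono[OF _ nbhd_sets])
  also have "\<dots> = (1/2)^n'" by (rule nbhd_measure)
  also have "\<dots> \<le> (1/2)^L" unfolding n'_def by (rule power_decreasing) auto
  finally have md: "measure coin ((A - B) \<union> (B - A)) \<le> (1/2)^L" .
  have 1: "measure coin ((A - B) \<union> (B - A)) < r" using md L(2) by simp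
  have "\<bar>dens A z n - dens B z n\<bar> \<le> 2^n * measure coin ((A - B) \<union> (B - A))"
    by (rule dens_perturb[OF A Bs])
  also have "\<dots> \<le> 2^n * (1/2)^n'"
    by (rule mult_left_mono) (use \<open>measure coin ((A - B) \<union> (B - A)) \<le> measure coin (nbhd w n')\<close> nbhd_measure in auto)
  also have "\<dots> = (1/2)^L" unfolding n'_def by (simp add: power_add power_divide)
  finally have dz: "dens B z n \<le> dens A z n + (1/2)^L" by linarith
  have "G1 B z n k j" unfolding G1_def
  proof (intro exI[of _ w] exI[of _ n'] conjI allI impI)
    show "n < n'" using L(1) unfolding n'_def by simp
    fix i assume "i < n" then show "w i = z i" unfolding w_def using gp_agree[of 0 L i n A z] by simp
  next
    have "dens B w n' = 1" by (rule dens_full) (simp add: B_def)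
    then show "dens B w n' > 1 - 1 / real (Suc k)" by simp
  next
    fix i assume i: "n \<le> i \<and> i \<le> n'"
    have iL: "i - n \<le> L" using i unfolding n'_def by arith
    have "dens A w i = dens A (gp A z n (i - n)) i"
      unfolding w_def
    proof (rule dens_cong)
      fix i' assume "i' < i"
      then have "i' < n + (i - n)" using i by simp
      then show "gp A z n L i' = gp A z n (i - n) i'" by (rule gp_agree[OF iL])
    qed
    also have "\<dots> \<ge> dens A z n" using gp_dens[OF A, of z n "i - n"] i by simp
    finally have "dens A w i \<ge> dens A z n" .
    moreover have "dens A w i \<le> dens B w i" by (rule dens_mono_set[OF _ Bs]) (auto simp: B_def)
    ultimately show "dens B w i > dens B z n - 1 / real (Suc j)" using dz L(2) by simp
  qed
  then show ?thesis using Bs 1 by blast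
qed

lemma G2_dense:
  assumes A: "A \<in> sets coin" and r: "r > 0"
  shows "\<exists>B\<in>sets coin. measure coin ((A - B) \<union> (B - A)) < r \<and> G2 B z n"
proof -
  obtain L :: nat where L: "L \<ge> 1" "(1/2::real)^L < r" using small_pow[OF r] by auto
  define n' where "n' = n + L"
  define B where "B = A - nbhd z n'"
  have Bs: "B \<in> sets coin" unfolding B_def using A nbhd_sets by auto
  have "(A - B) \<union> (B - A) \<subseteq> nbhd z n'" unfolding B_def by auto
  then have "measure coin ((A - B) \<union> (B - A)) \<le> measure coin (nbhd z n')"
    by (rule C.finite_measure_mono[OF _ nbhd_sets])
  also have "\<dots> = (1/2)^n'" by (rule nbhd_measure)
  also have "\<dots> \<le> (1/2)^L" unfolding n'_def by (rule power_decreasing) auto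
  finally have 1: "measure coin ((A - B) \<union> (B - A)) < r" using L(2) by simp
  have "dens B z n' = 0" by (rule dens_empty) (auto simp: B_def)
  then have "G2 B z n" unfolding G2_def unfolding n'_def by (intro exI[of _ z] exI[of _ "n + L"]) simp
  then show ?thesis using Bs 1 by blast
qed





definition pt :: "bool list \<Rightarrow> cantor" where "pt l = (\<lambda>i. i < length l \<and> l ! i)"

lemma pt_prefix: "i < n \<Longrightarrow> pt (map z [0..<n]) i = z i"
  unfolding pt_def by simp

type_synonym idx = "(bool list \<times> nat \<times> nat) + bool list"

definition Prop :: "idx \<Rightarrow> cantor set \<Rightarrow> bool" where
  "Prop q A = (case q of Inl (l, k, j) \<Rightarrow> G1 A (pt l) (length l) k j | Inr l \<Rightarrow> G2 A (pt l) (length l))"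

lemma Prop_null: "A \<in> sets coin \<Longrightarrow> B \<in> sets coin \<Longrightarrow> null_eq A B \<Longrightarrow> Prop q A = Prop q B"
  unfolding Prop_def using G1_null G2_null by (auto split: sum.splits)

lemma Prop_open:
  assumes "A \<in> sets coin" "Prop q A"
  shows "\<exists>r>0. \<forall>B\<in>sets coin. measure coin ((A - B) \<union> (B - A)) < r \<longrightarrow> Prop q B"
proof (cases q)
  case (Inl a)
  then obtain l k j where q: "q = Inl (l, k, j)" by (cases a) auto
  show ?thesis using G1_open[OF assms(1)] assms(2) unfolding q Prop_def by simp
next
  case (Inr l)
  show ?thesis using G2_open[OF assms(1)] assms(2) unfolding Inr Prop_def by simp
qed

lemma Prop_dense:
  assumes "A \<in> sets coin" "r > 0"
  shows "\<exists>B\<in>sets coin. measure coin ((A - B) \<union> (B - A)) < r \<and> Prop q B"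
proof (cases q)
  case (Inl a)
  then obtain l k j where q: "q = Inl (l, k, j)" by (cases a) auto
  show ?thesis using G1_dense[OF assms] unfolding q Prop_def by simp
next
  case (Inr l)
  show ?thesis using G2_dense[OF assms] unfolding Inr Prop_def by simp
qed

definition U :: "idx \<Rightarrow> cantor set set set" where "U q = {a \<in> MALG. Prop q (rep a)}"

lemma U_open: "openin malg_top (U q)"
  unfolding malg_top_eq MM.openin_mtopology
proof (intro conjI allI impI)
  show "U q \<subseteq> MALG" unfolding U_def by auto
  fix a assume a: "a \<in> U q"
  then have am: "a \<in> MALG" and p: "Prop q (rep a)" unfolding U_def by auto
  obtain r where r: "r > 0" "\<And>B. B \<in> sets coin \<Longrightarrow> measure coin ((rep a - B) \<union> (B - rep a)) < r \<Longrightarrow> Prop q B"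
    using Prop_open[OF MALG_rep(2)[OF am] p] by blast
  have "MM.mball a r \<subseteq> U q"
  proof
    fix b assume "b \<in> MM.mball a r"
    then have bm: "b \<in> MALG" and d: "malg_dist a b < r" by auto
    have "Prop q (rep b)" using r(2)[OF MALG_rep(2)[OF bm]] d unfolding malg_dist_rep by simp
    then show "b \<in> U q" unfolding U_def using bm by simp
  qed
  then show "\<exists>r>0. MM.mball a r \<subseteq> U q" using r(1) by blast
qed

lemma U_nd: "nowhere_dense_in malg_top (MALG - U q)"
  unfolding nowhere_dense_in_def
proof (intro conjI)
  show "MALG - U q \<subseteq> topspace malg_top" unfolding malg_top_eq by simp
  have cl: "closedin malg_top (MALG - U q)"
  proof -
    have "topspace malg_top - (MALG - U q) = U q" unfolding malg_top_eq U_def by auto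
    then show ?thesis unfolding closedin_def using U_open \<open>MALG - U q \<subseteq> topspace malg_top\<close> by simp
  qed
  show "malg_top interior_of (malg_top closure_of (MALG - U q)) = {}"
    unfolding closure_of_closedin[OF cl] interior_of_eq_empty
  proof (intro allI impI)
    fix T assume T: "openin malg_top T \<and> T \<subseteq> MALG - U q"
    show "T = {}"
    proof (rule ccontr)
      assume "T \<noteq> {}"
      then obtain a where aT: "a \<in> T" by blast
      have "T \<subseteq> MALG \<and> (\<forall>x. x \<in> T \<longrightarrow> (\<exists>r>0. MM.mball x r \<subseteq> T))"
        using T unfolding malg_top_eq MM.openin_mtopology by blast
      then obtain r where r: "r > 0" "MM.mball a r \<subseteq> T" using aT by blast
      have am: "a \<in> MALG" using T aT by blast
      obtain B where B: "B \<in> sets coin" "measure coin ((rep a - B) \<union> (B - rep a)) < r" "Prop q B"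
        using Prop_dense[OF MALG_rep(2)[OF am] r(1)] by blast
      define b where "b = cls B"
      have bm: "b \<in> MALG" unfolding b_def by (rule cls_MALG[OF B(1)])
      have nb: "null_eq B (rep b)" "rep b \<in> sets coin" unfolding b_def using rep_cls[OF B(1)] by auto
      have "Prop q (rep b)" using Prop_null[OF B(1) nb(2) nb(1)] B(3) by simp
      then have "b \<in> U q" unfolding U_def using bm by simp
      moreover have "malg_dist a b < r"
      proof -
        have "malg_dist a b \<le> measure coin ((rep a - B) \<union> (B - rep a)) + measure coin ((B - rep b) \<union> (rep b - B))"
          unfolding malg_dist_rep by (rule symd_tri[OF MALG_rep(2)[OF am] B(1) nb(2)])
        then show ?thesis using B(2) nb(1) unfolding null_eq_def by simp
      qed
      then have "b \<in> T" using r(2) am bm by auto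
      ultimately show False using T by blast
    qed
  qed
qed

lemma generic_complete:
  assumes a: "a \<in> MALG" "\<And>q. a \<in> U q" and A: "A \<in> a"
  shows "complete_Pi03 (Phi A)"
proof -
  have As: "A \<in> sets coin" and ne: "null_eq (rep a) A" using MALG_mem[OF a(1) A] by auto
  have P: "Prop q A" for q
    using a(2)[of q] Prop_null[OF MALG_rep(2)[OF a(1)] As ne] unfolding U_def by simp
  interpret gen A
  proof
    show "A \<in> sets coin" by (rule As)
    fix z n k j
    have "G1 A (pt (map z [0..<n])) n k j"
      using P[of "Inl (map z [0..<n], k, j)"] unfolding Prop_def by simp
    then show "G1 A z n k j" by (rule G1_prefix) (simp add: pt_prefix)
  next
    fix z n
    have "G2 A (pt (map z [0..<n])) n"
      using P[of "Inr (map z [0..<n])"] unfolding Prop_def by simp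
    then show "G2 A z n" by (rule G2_prefix) (simp add: pt_prefix)
  qed
  show ?thesis by (rule complete)
qed

theorem theorem1p7:
  shows "comeager_in malg_top {a \<in> MALG. \<forall>A \<in> a. complete_Pi03 (Phi A)}"
  unfolding comeager_in_def meager_in_def
proof (rule exI[of _ "\<lambda>i. MALG - U (from_nat i)"], intro conjI allI)
  show "nowhere_dense_in malg_top (MALG - U (from_nat i))" for i by (rule U_nd)
  show "topspace malg_top - {a \<in> MALG. \<forall>A\<in>a. complete_Pi03 (Phi A)} \<subseteq> (\<Union>i. MALG - U (from_nat i))"
  proof
    fix a assume "a \<in> topspace malg_top - {a \<in> MALG. \<forall>A\<in>a. complete_Pi03 (Phi A)}"
    then have am: "a \<in> MALG" and nc: "\<not> (\<forall>A\<in>a. complete_Pi03 (Phi A))" unfolding malg_top_eq by auto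
    show "a \<in> (\<Union>i. MALG - U (from_nat i))"
    proof (rule ccontr)
      assume "a \<notin> (\<Union>i. MALG - U (from_nat i))"
      then have ai: "a \<in> U (from_nat i)" for i using am by blast
      have "a \<in> U q" for q using ai[of "to_nat q"] by simp
      then have "\<forall>A\<in>a. complete_Pi03 (Phi A)" using generic_complete[OF am] by blast
      then show False using nc by simp
    qed
  qed
qed


end
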